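(* Define the score \[r=\frac{\mathrm{mark}}{\mathrm{entry}}\cdot\frac{\mathrm{notional}}{\mathrm{account\ value}}.\] 1. The score is homogeneous of degree zero in $(\mathrm{notional},\mathrm{account\ value})$: for every $\alpha>0$, $r(\alpha\,\mathrm{notional},\alpha\,\mathrm{account\ value})=r(\mathrm{notional},\mathrm{account\ value})$. 2. Therefore a proportional split of an account preserves its score. 3. If no other winner shares the parent's score, a proportional split preserves the aggregate seizure under the queue rule ranked by $r$; that is, the queue rule is Sybil resistant.
   Context: Each winning account has a mark price, an entry price, a notional, an account value $>0$, and a haircutable endowment. A proportional split of an account into children $a=1,\dots,m$ uses fractions $\alpha_a>0$ with $\sum_a\alpha_a=1$. Each child has notional, account value and endowment equal to $\alpha_a$ times the parent's, and the same mark and entry prices. The queue rule with budget $B$ works as follows: - It processes winners in decreasing order of score. - Each processed winner $j$ with endowment $w_j$ has $\min\{w_j,\text{remaining budget}\}$ seized. - The seized amount is subtracted from the remaining budget. The queue rule is Sybil resistant for a split if the total seizure from the children equals the seizure from the unsplit parent. *)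

theory Defs
  imports Complex_Main
begin

text \<open>A winning account: mark price, entry price, notional, account value, haircutable endowment.\<close>
record account =
  mark :: real
  entry :: real
  notional :: real
  acct_value :: real
  endow :: real

definition score_fn :: "real \<Rightarrow> real \<Rightarrow> real \<Rightarrow> real \<Rightarrow> real" where
  "score_fn m e n v = (m / e) * (n / v)"

definition score :: "account \<Rightarrow> real" where
  "score a = score_fn (mark a) (entry a) (notional a) (acct_value a)"

definition split_child :: "real \<Rightarrow> account \<Rightarrow> account" where
  "split_child \<alpha> p = \<lparr>mark = mark p, entry = entry p, notional = \<alpha> * notional p,
                        acct_value = \<alpha> * acct_value p, endow = \<alpha> * endow p\<rparr>"

definition proportional_split :: "real list \<Rightarrow> account \<Rightarrow> account list" where
  "proportional_split \<alpha>s p = map (\<lambda>\<alpha>. split_child \<alpha> p) \<alpha>s"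

definition valid_fractions :: "real list \<Rightarrow> bool" where
  "valid_fractions \<alpha>s \<longleftrightarrow> \<alpha>s \<noteq> [] \<and> (\<forall>\<alpha>\<in>set \<alpha>s. \<alpha> > 0) \<and> sum_list \<alpha>s = 1"

fun seize_seq :: "real \<Rightarrow> real list \<Rightarrow> real" where
  "seize_seq B [] = 0"
| "seize_seq B (w # ws) = min w B + seize_seq (B - min w B) ws"

text \<open>Queue rule: winners processed in decreasing order of score (ties kept in
  input order, stable sort).\<close>
definition queue_total :: "real \<Rightarrow> account list \<Rightarrow> real" where
  "queue_total B ws = seize_seq B (map endow (sort_key (\<lambda>a. - score a) ws))"

end

theory Submission
  imports Defs
begin

lemma seize_app: "seize_seq B (xs @ ys) = seize_seq B xs + seize_seq (B - seize_seq B xs) ys"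
  by (induction xs arbitrary: B) (auto simp: algebra_simps)

lemma seize_le: "B \<ge> 0 \<Longrightarrow> seize_seq B xs \<le> B"
proof (induction xs arbitrary: B)
  case (Cons w ws)
  have "seize_seq (B - min w B) ws \<le> B - min w B" using Cons by (intro Cons.IH) auto
  thus ?case by simp
qed simp

lemma min_combine:
  fixes w1 w2 B :: real
  assumes "B \<ge> 0" "(w1 \<ge> 0 \<and> w2 \<ge> 0) \<or> (w1 \<le> 0 \<and> w2 \<le> 0)"
  shows "min w1 B + min w2 (B - min w1 B) = min (w1 + w2) B"
  using assms by (auto simp: min_def)

lemma seize_children:
  fixes w B :: real
  assumes "B \<ge> 0" "\<forall>a\<in>set as. a > 0"
  shows "seize_seq B (map (\<lambda>a. a * w) as) = min (sum_list as * w) B"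
  using assms
proof (induction as arbitrary: B)
  case Nil then show ?case by simp
next
  case (Cons a as)
  have S: "sum_list as \<ge> 0" using Cons.prems by (intro sum_list_nonneg) auto
  have B': "B - min (a*w) B \<ge> 0" by simp
  have "seize_seq B (map (\<lambda>a. a * w) (a # as)) = min (a*w) B + min (sum_list as * w) (B - min (a*w) B)"
    using Cons.IH[OF B'] Cons.prems by simp
  also have "\<dots> = min (a*w + sum_list as * w) B"
  proof (rule min_combine[OF Cons.prems(1)])
    have "a > 0" using Cons.prems by simp
    then show "(a*w \<ge> 0 \<and> sum_list as * w \<ge> 0) \<or> (a*w \<le> 0 \<and> sum_list as * w \<le> 0)"
      using S by (cases "w \<ge> 0") (auto simp: mult_nonneg_nonpos mult_nonpos_nonneg)
  qed
  finally show ?case by (simp add: algebra_simps)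
qed

lemma sorted_split3:
  fixes f :: "'a \<Rightarrow> real"
  assumes "sorted (map f L)"
  shows "L = filter (\<lambda>x. f x < k) L @ filter (\<lambda>x. f x = k) L @ filter (\<lambda>x. f x > k) L"
  using assms
proof (induction L)
  case Nil then show ?case by simp
next
  case (Cons x L)
  have IH: "L = filter (\<lambda>x. f x < k) L @ filter (\<lambda>x. f x = k) L @ filter (\<lambda>x. f x > k) L"
    using Cons by simp
  have ge: "\<forall>y\<in>set L. f x \<le> f y" using Cons.prems by simp
  show ?case
  proof (cases "f x < k")
    case True then show ?thesis using IH by simp
  next
    case False
    then have "filter (\<lambda>x. f x < k) L = []" using ge by (auto simp: filter_empty_conv)
    moreover have "f x = k \<or> f x > k" using False by auto
    moreover have "f x > k \<Longrightarrow> filter (\<lambda>x. f x = k) L = []" using ge by (auto simp: filter_empty_conv)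
    ultimately show ?thesis using IH False by auto
  qed
qed

lemma sort_split3:
  fixes f :: "'a \<Rightarrow> real"
  shows "sort_key f xs = sort_key f (filter (\<lambda>x. f x < k) xs) @ filter (\<lambda>x. f x = k) xs
          @ sort_key f (filter (\<lambda>x. f x > k) xs)"
proof -
  have "sort_key f xs = filter (\<lambda>x. f x < k) (sort_key f xs) @ filter (\<lambda>x. f x = k) (sort_key f xs)
          @ filter (\<lambda>x. f x > k) (sort_key f xs)"
    by (rule sorted_split3) simp
  then show ?thesis by (simp only: sort_key_stable filter_sort)
qed

theorem mainTheorem6:
  shows "(\<forall>m e n v \<alpha>. \<alpha> > 0 \<longrightarrow> score_fn m e (\<alpha> * n) (\<alpha> * v) = score_fn m e n v)
    \<and> (\<forall>p \<alpha>s. valid_fractions \<alpha>s \<longrightarrow>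
         (\<forall>c\<in>set (proportional_split \<alpha>s p). score c = score p))
    \<and> (\<forall>B p \<alpha>s ws1 ws2. B \<ge> 0 \<longrightarrow> valid_fractions \<alpha>s \<longrightarrow>
         acct_value p > 0 \<longrightarrow> (\<forall>a\<in>set (ws1 @ ws2). acct_value a > 0) \<longrightarrow>
         (\<forall>a\<in>set (ws1 @ ws2). score a \<noteq> score p) \<longrightarrow>
         queue_total B (ws1 @ proportional_split \<alpha>s p @ ws2) = queue_total B (ws1 @ p # ws2))"
proof (intro conjI allI impI)
  have hom: "score_fn m e (\<alpha> * n) (\<alpha> * v) = score_fn m e n v" if "\<alpha> > 0" for m e n v \<alpha> :: real
    using that by (simp add: score_fn_def)
  show "score_fn m e (\<alpha> * n) (\<alpha> * v) = score_fn m e n v" if "\<alpha> > 0" for m e n v \<alpha> :: real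
    using hom[OF that] .
  have chs: "score c = score p" if hv: "valid_fractions \<alpha>s" "c \<in> set (proportional_split \<alpha>s p)" for p \<alpha>s c
  proof -
    obtain a where a: "a \<in> set \<alpha>s" "c = split_child a p"
      using hv(2) by (auto simp: proportional_split_def)
    have "a > 0" using a hv(1) by (auto simp: valid_fractions_def)
    then show ?thesis using a hom by (simp add: score_def split_child_def)
  qed
  show "\<forall>c\<in>set (proportional_split \<alpha>s p). score c = score p" if "valid_fractions \<alpha>s" for p \<alpha>s
    using chs[OF that] by blast
  fix B :: real and p :: account and \<alpha>s :: "real list" and ws1 ws2 :: "account list"
  assume B: "0 \<le> B" and vf: "valid_fractions \<alpha>s" and "0 < acct_value p"
    and "\<forall>a\<in>set (ws1 @ ws2). 0 < acct_value a"
    and ns: "\<forall>a\<in>set (ws1 @ ws2). score a \<noteq> score p"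
  define f where "f = (\<lambda>a. - score a)"
  define k where "k = f p"
  define cs where "cs = proportional_split \<alpha>s p"
  have csk: "\<forall>c\<in>set cs. f c = k" using chs[OF vf] by (simp add: cs_def f_def k_def)
  have nk: "\<forall>a\<in>set (ws1 @ ws2). f a \<noteq> k" using ns by (simp add: f_def k_def)
  have fl1: "filter (\<lambda>x. f x < k) (ws1 @ cs @ ws2) = filter (\<lambda>x. f x < k) (ws1 @ ws2)"
    using csk by (simp add: filter_empty_conv)
  have fl2: "filter (\<lambda>x. f x > k) (ws1 @ cs @ ws2) = filter (\<lambda>x. f x > k) (ws1 @ ws2)"
    using csk by (simp add: filter_empty_conv)
  have fe1: "filter (\<lambda>x. f x = k) (ws1 @ cs @ ws2) = cs"
    using csk nk by (simp add: filter_empty_conv)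
  have fp1: "filter (\<lambda>x. f x < k) (ws1 @ p # ws2) = filter (\<lambda>x. f x < k) (ws1 @ ws2)"
    by (simp add: k_def)
  have fp2: "filter (\<lambda>x. f x > k) (ws1 @ p # ws2) = filter (\<lambda>x. f x > k) (ws1 @ ws2)"
    by (simp add: k_def)
  have fe2: "filter (\<lambda>x. f x = k) (ws1 @ p # ws2) = [p]"
    using nk by (simp add: filter_empty_conv k_def)
  define A where "A = map endow (sort_key f (filter (\<lambda>x. f x < k) (ws1 @ ws2)))"
  define C where "C = map endow (sort_key f (filter (\<lambda>x. f x > k) (ws1 @ ws2)))"
  have L: "queue_total B (ws1 @ cs @ ws2) = seize_seq B (A @ map endow cs @ C)"
    unfolding queue_total_def f_def[symmetric]
    by (subst sort_split3[of f _ k]) (simp only: fl1 fl2 fe1 A_def C_def map_append)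
  have R: "queue_total B (ws1 @ p # ws2) = seize_seq B (A @ [endow p] @ C)"
    unfolding queue_total_def f_def[symmetric]
    by (subst sort_split3[of f _ k]) (simp only: fp1 fp2 fe2 A_def C_def map_append list.map)
  define B' where "B' = B - seize_seq B A"
  have B': "B' \<ge> 0" using seize_le[OF B] by (simp add: B'_def)
  have pos: "\<forall>a\<in>set \<alpha>s. a > 0" and s1: "sum_list \<alpha>s = 1" using vf by (auto simp: valid_fractions_def)
  have mc: "map endow cs = map (\<lambda>a. a * endow p) \<alpha>s"
    by (simp add: cs_def proportional_split_def split_child_def)
  have "seize_seq B' (map endow cs) = min (endow p) B'"
    using seize_children[OF B' pos, of "endow p"] mc s1 by simp
  moreover have "seize_seq B' [endow p] = min (endow p) B'" by simp
  ultimately have "seize_seq B' (map endow cs @ C) = seize_seq B' ([endow p] @ C)"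
    by (simp only: seize_app)
  then show "queue_total B (ws1 @ proportional_split \<alpha>s p @ ws2) = queue_total B (ws1 @ p # ws2)"
    using L R by (simp add: seize_app B'_def cs_def del: append.simps)
qed

end
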